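(* Let $a, b, n_L, n_R, d \in \mathbb{N}$ satisfy $d \ge 2b$ and $n_L \ge a \cdot (2n_R/d)^b$. Then every $K_{a,b}$-free bipartite graph with $n_L$ left vertices and $n_R$ right vertices has a left vertex of degree at most $d$.
   Context: A bipartite graph with a designated left and right side is $K_{a,b}$-free if there are no $a$ left vertices and $b$ right vertices such that every one of the $a$ left vertices is adjacent to every one of the $b$ right vertices. *)

theory Defs
  imports Complex_Main
begin

text \<open>A bipartite graph is given by a finite left vertex set L, a finite right
vertex set R and an adjacency relation E (only pairs in L \<times> R are relevant).\<close>

definition Kab_free :: "'a set \<Rightarrow> 'b set \<Rightarrow> ('a \<Rightarrow> 'b \<Rightarrow> bool) \<Rightarrow> nat \<Rightarrow> nat \<Rightarrow> bool" where
  "Kab_free L R E a b \<longleftrightarrow>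
     \<not> (\<exists>A B. A \<subseteq> L \<and> B \<subseteq> R \<and> card A = a \<and> card B = b \<and> (\<forall>x\<in>A. \<forall>y\<in>B. E x y))"

definition left_degree :: "'b set \<Rightarrow> ('a \<Rightarrow> 'b \<Rightarrow> bool) \<Rightarrow> 'a \<Rightarrow> nat" where
  "left_degree R E v = card {w \<in> R. E v w}"

end

theory Submission
  imports Defs
begin

lemma binom_ratio:
  fixes n b d :: nat
  assumes "d \<ge> 2 * b" "d \<ge> 1"
  shows "real (n choose b) \<le> (2 * real n / real d) ^ b * real ((d+1) choose b)"
proof (cases "b \<le> n")
  case False
  hence "n choose b = 0" by simp
  moreover have "0 \<le> (2 * real n / real d) ^ b * real ((d+1) choose b)" by simp
  ultimately show ?thesis by (simp del: binomial_eq_0_iff)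
next
  case True
  have e1: "real (n choose b) = (\<Prod>i = 0..<b. real (n - i) / real (b - i))"
    using True binomial_altdef_of_nat by blast
  have e2: "real ((d+1) choose b) = (\<Prod>i = 0..<b. real (d + 1 - i) / real (b - i))"
    using assms binomial_altdef_of_nat[of b "d+1"] by simp
  have "(2 * real n / real d) ^ b * real ((d+1) choose b)
      = (\<Prod>i = 0..<b. (2 * real n / real d) * (real (d + 1 - i) / real (b - i)))"
    unfolding e2 prod.distrib by simp
  moreover have "(\<Prod>i = 0..<b. real (n - i) / real (b - i))
      \<le> (\<Prod>i = 0..<b. (2 * real n / real d) * (real (d + 1 - i) / real (b - i)))"
  proof (rule prod_mono)
    fix i assume i: "i \<in> {0..<b}"
    have bi: "real (b - i) > 0" using i by simp
    have "real (n - i) \<le> real n" by simp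
    also have "real n \<le> (2 * real n / real d) * real (d + 1 - i)"
    proof -
      have "real (d + 1 - i) \<ge> real d / 2" using i assms by (simp add: of_nat_diff)
      hence "(2 * real n / real d) * real (d + 1 - i) \<ge> (2 * real n / real d) * (real d / 2)"
        by (intro mult_left_mono) auto
      moreover have "(2 * real n / real d) * (real d / 2) = real n" using assms by simp
      ultimately show ?thesis by simp
    qed
    finally have "real (n - i) \<le> (2 * real n / real d) * real (d + 1 - i)" .
    hence "real (n - i) / real (b - i) \<le> (2 * real n / real d) * real (d + 1 - i) / real (b - i)"
      using bi by (intro divide_right_mono) auto
    thus "0 \<le> real (n - i) / real (b - i) \<and>
        real (n - i) / real (b - i) \<le> 2 * real n / real d * (real (d + 1 - i) / real (b - i))"
      by simp
  qed
  ultimately show ?thesis using e1 by simp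
qed

theorem lemma2p5:
  fixes L :: "'a set" and R :: "'b set" and E :: "'a \<Rightarrow> 'b \<Rightarrow> bool"
    and a b nL nR d :: nat
  assumes "a \<ge> 1" "b \<ge> 1" "nL \<ge> 1" "nR \<ge> 1" "d \<ge> 1"
    and "d \<ge> 2 * b"
    and "real nL \<ge> real a * (2 * real nR / real d) ^ b"
    and "finite L" "finite R" "card L = nL" "card R = nR"
    and "Kab_free L R E a b"
  shows "\<exists>v\<in>L. left_degree R E v \<le> d"
proof (rule ccontr)
  assume "\<not> ?thesis"
  hence deg: "\<forall>v\<in>L. card {w \<in> R. E v w} \<ge> d + 1"
    by (auto simp: left_degree_def)
  define N where "N v = {w \<in> R. E v w}" for v
  define P where "P = {B. B \<subseteq> R \<and> card B = b}"
  have finP: "finite P" unfolding P_def using assms(9) by simp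
  have cardP: "card P = nR choose b" unfolding P_def using n_subsets[OF assms(9)] assms(11) by simp
  define S where "S = (\<Sum>v\<in>L. \<Sum>B\<in>P. if B \<subseteq> N v then 1 else 0 :: nat)"
  have "S = (\<Sum>v\<in>L. card {B. B \<subseteq> N v \<and> card B = b})"
    unfolding S_def
  proof (rule sum.cong[OF refl])
    fix v assume "v \<in> L"
    have "(\<Sum>B\<in>P. if B \<subseteq> N v then 1 else 0 :: nat) = card {B \<in> P. B \<subseteq> N v}"
      using finP by (simp add: sum.If_cases Int_def)
    also have "{B \<in> P. B \<subseteq> N v} = {B. B \<subseteq> N v \<and> card B = b}"
      unfolding P_def N_def by auto
    finally show "(\<Sum>B\<in>P. if B \<subseteq> N v then 1 else 0 :: nat) = card {B. B \<subseteq> N v \<and> card B = b}" .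
  qed
  also have "\<dots> = (\<Sum>v\<in>L. card (N v) choose b)"
    using assms(9) by (intro sum.cong refl n_subsets) (simp add: N_def)
  also have "\<dots> \<ge> (\<Sum>v\<in>L. (d+1) choose b)"
    using deg by (intro sum_mono binomial_right_mono) (simp add: N_def)
  finally have lo: "S \<ge> nL * ((d+1) choose b)" using assms(10) by simp
  have "S = (\<Sum>B\<in>P. \<Sum>v\<in>L. if B \<subseteq> N v then 1 else 0 :: nat)"
    unfolding S_def by (rule sum.swap)
  also have "\<dots> = (\<Sum>B\<in>P. card {v \<in> L. B \<subseteq> N v})"
    using assms(8) by (simp add: sum.If_cases Int_def)
  also have "\<dots> \<le> (\<Sum>B\<in>P. a - 1)"
  proof (rule sum_mono)
    fix B assume B: "B \<in> P"
    show "card {v \<in> L. B \<subseteq> N v} \<le> a - 1"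
    proof (rule ccontr)
      assume "\<not> ?thesis"
      hence "a \<le> card {v \<in> L. B \<subseteq> N v}" by simp
      then obtain A where A: "A \<subseteq> {v \<in> L. B \<subseteq> N v}" "card A = a"
        by (meson obtain_subset_with_card_n)
      have "A \<subseteq> L \<and> B \<subseteq> R \<and> card A = a \<and> card B = b \<and> (\<forall>x\<in>A. \<forall>y\<in>B. E x y)"
        using A B unfolding P_def N_def by auto
      thus False using assms(12) unfolding Kab_free_def by blast
    qed
  qed
  finally have hi: "S \<le> (a - 1) * (nR choose b)" using cardP by (simp add: mult.commute)
  have "real nL * real ((d+1) choose b) \<le> real (a - 1) * real (nR choose b)"
    using lo hi by (metis le_trans of_nat_le_iff of_nat_mult)
  also have "\<dots> \<le> real (a - 1) * ((2 * real nR / real d) ^ b * real ((d+1) choose b))"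
    using binom_ratio[OF assms(6) assms(5)] by (intro mult_left_mono) auto
  also have "\<dots> < real a * ((2 * real nR / real d) ^ b * real ((d+1) choose b))"
  proof (rule mult_strict_right_mono)
    show "real (a - 1) < real a" using assms(1) by simp
    have "(d+1) choose b > 0" using assms by simp
    moreover have "2 * real nR / real d > 0" using assms by simp
    ultimately show "0 < (2 * real nR / real d) ^ b * real ((d+1) choose b)" by simp
  qed
  also have "\<dots> \<le> real nL * real ((d+1) choose b)"
    using assms(7) by (simp add: mult.assoc[symmetric] mult_right_mono)
  finally show False by simp
qed

end
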